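(* Let $P,P',P'',Q,S$ be programs and $B$ a Boolean expression such that $P'\equiv_B(P,B)$ and $P''\equiv_B(P,\neg B)$. If the operational triple $\{|P'|\}\ S\ \{|Q|\}$ holds and $P''\sqsubseteq Q$, then $\{|P|\}\ \mathbf{if}\ B\ \mathbf{then}\ S\ \mathbf{fi}\ \{|Q|\}$ holds.
   Context: Programs are statements of a sequential imperative language with a standard small-step operational semantics over program states. $\mathrm{behs}(P)$ is the set of pairs (initial state, final state) of finite terminating executions of $P$; $(s,u)\in\mathrm{behs}(P;Q)$ iff there is $t$ with $(s,t)\in\mathrm{behs}(P)$ and $(t,u)\in\mathrm{behs}(Q)$. For a state $s$ and Boolean expression $B$, $s(B)\in\{\mathit{tt},\mathit{ff}\}$ is the (side-effect-free) value of $B$ in $s$. The statement $\mathbf{if}\ B\ \mathbf{then}\ S\ \mathbf{fi}$ started in state $s$ executes $S$ from $s$ if $s(B)=\mathit{tt}$ and otherwise terminates in $s$ without changing the state. The post-state set is $\mathrm{pst}(P)=\{t:\exists s,\ (s,t)\in\mathrm{behs}(P)\}$. Program ordering: $P\sqsubseteq Q$ iff $\mathrm{pst}(P)\subseteq\mathrm{pst}(Q)$. The operational triple $\{|P|\}\ S\ \{|Q|\}$ means $\mathrm{pst}(P;S)\subseteq\mathrm{pst}(Q)$. For programs $P',P$ and Boolean expression $B$, $P'\equiv_B(P,B)$ means $\mathrm{pst}(P')=\mathrm{pst}(P)\cap\{s : s(B)=\mathit{tt}\}$. *)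

theory Defs
  imports Main
begin

type_synonym 's bexp = "'s \<Rightarrow> bool"

datatype 's com =
    Skip
  | Basic "('s \<times> 's) set"
  | Seq "'s com" "'s com"        (infixr ";;" 60)
  | IfThenElse "'s bexp" "'s com" "'s com"
  | IfThen "'s bexp" "'s com"
  | While "'s bexp" "'s com"

inductive small_step :: "'s com \<times> 's \<Rightarrow> 's com \<times> 's \<Rightarrow> bool" (infix "\<rightarrow>" 55) where
  Basic: "(s, t) \<in> R \<Longrightarrow> (Basic R, s) \<rightarrow> (Skip, t)"
| Seq1: "(Skip ;; c2, s) \<rightarrow> (c2, s)"
| Seq2: "(c1, s) \<rightarrow> (c1', s') \<Longrightarrow> (c1 ;; c2, s) \<rightarrow> (c1' ;; c2, s')"
| IfTrue: "b s \<Longrightarrow> (IfThenElse b c1 c2, s) \<rightarrow> (c1, s)"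
| IfFalse: "\<not> b s \<Longrightarrow> (IfThenElse b c1 c2, s) \<rightarrow> (c2, s)"
| IfThenTrue: "b s \<Longrightarrow> (IfThen b c, s) \<rightarrow> (c, s)"
| IfThenFalse: "\<not> b s \<Longrightarrow> (IfThen b c, s) \<rightarrow> (Skip, s)"
| While: "(While b c, s) \<rightarrow> (IfThenElse b (c ;; While b c) Skip, s)"

definition behs :: "'s com \<Rightarrow> ('s \<times> 's) set" where
  "behs P = {(s, t). small_step\<^sup>*\<^sup>* (P, s) (Skip, t)}"

definition pst :: "'s com \<Rightarrow> 's set" where
  "pst P = {t. \<exists>s. (s, t) \<in> behs P}"

definition prog_le :: "'s com \<Rightarrow> 's com \<Rightarrow> bool" (infix "\<sqsubseteq>" 50) where
  "P \<sqsubseteq> Q \<longleftrightarrow> pst P \<subseteq> pst Q"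

definition op_triple :: "'s com \<Rightarrow> 's com \<Rightarrow> 's com \<Rightarrow> bool" where
  "op_triple P S Q \<longleftrightarrow> pst (P ;; S) \<subseteq> pst Q"

definition restrict_equiv :: "'s com \<Rightarrow> 's com \<Rightarrow> 's bexp \<Rightarrow> bool" where
  "restrict_equiv P' P B \<longleftrightarrow> pst P' = pst P \<inter> {s. B s}"

end

theory Submission
  imports Defs
begin

inductive_cases SkipE[elim!]: "(Skip, s) \<rightarrow> y"
inductive_cases SeqE2: "(c1 ;; c2, s) \<rightarrow> (c', s')"
inductive_cases SeqE: "(c1 ;; c2, s) \<rightarrow> y"
inductive_cases IfThenE2: "(IfThen b c, s) \<rightarrow> (c', s')"
inductive_cases IfThenE: "(IfThen b c, s) \<rightarrow> y"

lemma skip_star: "small_step\<^sup>*\<^sup>* (Skip, s) (Skip, u) \<Longrightarrow> u = s"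
  by (erule converse_rtranclpE) auto

lemma seq_decomp:
  "small_step\<^sup>*\<^sup>* cs cs' \<Longrightarrow> cs = (c1 ;; c2, s) \<Longrightarrow> cs' = (Skip, u) \<Longrightarrow>
   \<exists>t. small_step\<^sup>*\<^sup>* (c1, s) (Skip, t) \<and> small_step\<^sup>*\<^sup>* (c2, t) (Skip, u)"
proof (induction arbitrary: c1 s rule: converse_rtranclp_induct)
  case base then show ?case by simp
next
  case (step y z)
  obtain zc zs where zdef: "z = (zc, zs)" by (cases z)
  from step.hyps(1) step.prems(1) zdef have st: "(c1 ;; c2, s) \<rightarrow> (zc, zs)" by simp
  from st have "(c1 = Skip \<and> zc = c2 \<and> zs = s) \<or>
     (\<exists>c1'. zc = c1' ;; c2 \<and> (c1, s) \<rightarrow> (c1', zs))"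
    by (rule SeqE2) auto
  then show ?case
  proof
    assume h: "c1 = Skip \<and> zc = c2 \<and> zs = s"
    then show ?thesis using step.hyps(2) step.prems(2) zdef by auto
  next
    assume "\<exists>c1'. zc = c1' ;; c2 \<and> (c1, s) \<rightarrow> (c1', zs)"
    then obtain c1' where z: "zc = c1' ;; c2" "(c1, s) \<rightarrow> (c1', zs)" by blast
    have "\<exists>t. small_step\<^sup>*\<^sup>* (c1', zs) (Skip, t) \<and> small_step\<^sup>*\<^sup>* (c2, t) (Skip, u)"
      by (rule step.IH) (simp_all add: z zdef step.prems)
    then obtain t where t: "small_step\<^sup>*\<^sup>* (c1', zs) (Skip, t)" "small_step\<^sup>*\<^sup>* (c2, t) (Skip, u)"
      by blast
    have "small_step\<^sup>*\<^sup>* (c1, s) (Skip, t)"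
      using converse_rtranclp_into_rtranclp[OF z(2) t(1)] by simp
    then show ?thesis using t(2) by blast
  qed
qed

lemma seq_lift:
  "small_step\<^sup>*\<^sup>* (c1, s) (c1', s') \<Longrightarrow> small_step\<^sup>*\<^sup>* (c1 ;; c2, s) (c1' ;; c2, s')"
proof (induction rule: converse_rtranclp_induct2)
  case refl then show ?case by simp
next
  case (step a b a' b')
  then show ?case by (meson Seq2 converse_rtranclp_into_rtranclp)
qed

lemma seq_comp:
  "small_step\<^sup>*\<^sup>* (c1, s) (Skip, t) \<Longrightarrow> small_step\<^sup>*\<^sup>* (c2, t) (Skip, u) \<Longrightarrow>
   small_step\<^sup>*\<^sup>* (c1 ;; c2, s) (Skip, u)"
  using seq_lift[of c1 s Skip t c2]
  by (meson Seq1 converse_rtranclp_into_rtranclp rtranclp_trans)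

lemma pst_seq: "pst (c1 ;; c2) = {u. \<exists>t \<in> pst c1. (t, u) \<in> behs c2}"
proof
  show "pst (c1 ;; c2) \<subseteq> {u. \<exists>t \<in> pst c1. (t, u) \<in> behs c2}"
  proof
    fix u assume "u \<in> pst (c1 ;; c2)"
    then obtain s where "small_step\<^sup>*\<^sup>* (c1 ;; c2, s) (Skip, u)"
      unfolding pst_def behs_def by blast
    from seq_decomp[OF this refl refl] obtain t where
      "small_step\<^sup>*\<^sup>* (c1, s) (Skip, t)" "small_step\<^sup>*\<^sup>* (c2, t) (Skip, u)" by blast
    then show "u \<in> {u. \<exists>t \<in> pst c1. (t, u) \<in> behs c2}"
      unfolding pst_def behs_def by blast
  qed
next
  show "{u. \<exists>t \<in> pst c1. (t, u) \<in> behs c2} \<subseteq> pst (c1 ;; c2)"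
  proof
    fix u assume "u \<in> {u. \<exists>t \<in> pst c1. (t, u) \<in> behs c2}"
    then obtain s t where "small_step\<^sup>*\<^sup>* (c1, s) (Skip, t)" "small_step\<^sup>*\<^sup>* (c2, t) (Skip, u)"
      unfolding pst_def behs_def by blast
    from seq_comp[OF this] show "u \<in> pst (c1 ;; c2)"
      unfolding pst_def behs_def by blast
  qed
qed

lemma ifthen_decomp:
  assumes "small_step\<^sup>*\<^sup>* (IfThen b c, t) (Skip, u)"
  shows "(b t \<and> small_step\<^sup>*\<^sup>* (c, t) (Skip, u)) \<or> (\<not> b t \<and> u = t)"
  using assms
proof (cases rule: converse_rtranclpE)
  case base then show ?thesis by simp
next
  case (step y)
  from step(1) have "(b t \<and> y = (c, t)) \<or> (\<not> b t \<and> y = (Skip, t))"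
    by (cases y) (auto elim: IfThenE2)
  then show ?thesis using step(2) skip_star[of t u] by auto
qed

theorem theorem4:
  fixes P P' P'' Q S :: "'s com" and B :: "'s bexp"
  assumes "restrict_equiv P' P B"
    and "restrict_equiv P'' P (\<lambda>s. \<not> B s)"
    and "op_triple P' S Q"
    and "P'' \<sqsubseteq> Q"
  shows "op_triple P (IfThen B S) Q"
  unfolding op_triple_def
proof
  fix u assume "u \<in> pst (P ;; IfThen B S)"
  then obtain t where t: "t \<in> pst P" "(t, u) \<in> behs (IfThen B S)"
    unfolding pst_seq by blast
  from t(2) have "(B t \<and> (t, u) \<in> behs S) \<or> (\<not> B t \<and> u = t)"
    unfolding behs_def using ifthen_decomp[of B S t u] by simp
  then show "u \<in> pst Q"
  proof
    assume h: "B t \<and> (t, u) \<in> behs S"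
    then have "t \<in> pst P'" using assms(1) t(1) unfolding restrict_equiv_def by auto
    then have "u \<in> pst (P' ;; S)" unfolding pst_seq using h by blast
    then show ?thesis using assms(3) unfolding op_triple_def by blast
  next
    assume h: "\<not> B t \<and> u = t"
    then have "t \<in> pst P''" using assms(2) t(1) unfolding restrict_equiv_def by auto
    then show ?thesis using h assms(4) unfolding prog_le_def by blast
  qed
qed

end
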